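(* Let $k,r\in\mathbb{N}$ and let $G$ be a countably infinite, one-way $k$-locally finite graph. (i) If $k=2$, then $\mathrm{Rd}_r(G)\geq 1/r$ (for every $r\ge 1$). (ii) If $k\geq 2$, then $\mathrm{Rd}_2(G)\geq \frac{1}{2(k-1)}$. (iii) If $r\geq 3$ and $k\geq 3$, then $\mathrm{Rd}_r(G)\geq \frac{1}{\sum_{i=0}^{(k-2)r+1}(r-1)^i}\geq \frac{1}{r^{(k-2)r+1}}$.
   Context: $K_{\mathbb{N}}$ is the complete graph on vertex set $\mathbb{N}=\{1,2,\dots\}$. An $r$-coloring is a map from the edges of $K_\mathbb{N}$ to $[r]=\{1,\dots,r\}$. A copy of a graph $G$ in $K_\mathbb{N}$ is a subgraph of $K_\mathbb{N}$ isomorphic to $G$; it is monochromatic if all its edges receive the same color. For $V\subseteq\mathbb{N}$ the upper density is $\overline{d}(V)=\limsup_{t\to\infty}|V\cap\{1,\dots,t\}|/t$, and the upper density of a copy is the upper density of its vertex set. For an $r$-coloring $\varphi$, $\mathrm{Rd}_\varphi(G)$ is the supremum of upper densities of monochromatic copies of $G$ in $\varphi$ (0 if none), and $\mathrm{Rd}_r(G)$ is the infimum of $\mathrm{Rd}_\varphi(G)$ over all $r$-colorings $\varphi$; $\mathrm{Rd}(G)=\mathrm{Rd}_2(G)$. A graph $G$ is one-way $k$-locally finite ($k\ge2$) if there is a partition of $V(G)$ into $k$ independent sets $V_1,\dots,V_k$ with $|V_1|\geq\dots\geq|V_k|$ such that for all $1\le i<j\le k$ and all $v\in V_j$, $v$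 has only finitely many neighbors in $V_i$. *)

theory Defs
  imports "HOL-Library.Extended_Real" "HOL-Library.Liminf_Limsup"
begin

definition upper_density :: "nat set \<Rightarrow> ereal" where
  "upper_density S = limsup (\<lambda>t. ereal (real (card (S \<inter> {1..t})) / real t))"

text \<open>An r-colouring of the edges of the complete graph on {1,2,...};
  edges are represented as two-element sets of positive integers.\<close>
definition r_coloring :: "nat \<Rightarrow> (nat set \<Rightarrow> nat) \<Rightarrow> bool" where
  "r_coloring r col \<longleftrightarrow>
     (\<forall>x y. 1 \<le> x \<longrightarrow> 1 \<le> y \<longrightarrow> x \<noteq> y \<longrightarrow> col {x, y} \<in> {1..r})"

definition simple_graph :: "'a set \<Rightarrow> ('a \<Rightarrow> 'a \<Rightarrow> bool) \<Rightarrow> bool" where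
  "simple_graph V E \<longleftrightarrow>
     (\<forall>u v. E u v \<longrightarrow> u \<in> V \<and> v \<in> V \<and> u \<noteq> v \<and> E v u)"

definition mono_copies :: "(nat set \<Rightarrow> nat) \<Rightarrow> 'a set \<Rightarrow> ('a \<Rightarrow> 'a \<Rightarrow> bool) \<Rightarrow> nat set set" where
  "mono_copies col V E =
     {f ` V | f. inj_on f V \<and> f ` V \<subseteq> {1..} \<and>
                (\<exists>c. \<forall>u v. E u v \<longrightarrow> col {f u, f v} = c)}"

definition Rd_col :: "(nat set \<Rightarrow> nat) \<Rightarrow> 'a set \<Rightarrow> ('a \<Rightarrow> 'a \<Rightarrow> bool) \<Rightarrow> ereal" where
  "Rd_col col V E = Sup ({0} \<union> upper_density ` mono_copies col V E)"

definition Rd :: "nat \<Rightarrow> 'a set \<Rightarrow> ('a \<Rightarrow> 'a \<Rightarrow> bool) \<Rightarrow> ereal" where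
  "Rd r V E = Inf ((\<lambda>col. Rd_col col V E) ` {col. r_coloring r col})"

text \<open>One-way k-locally finite: partition into k independent sets P 1, ..., P k
  with |P 1| \<ge> ... \<ge> |P k| (cardinality comparison via injections) such that each
  vertex of P j has finitely many neighbours in P i whenever i < j.\<close>
definition one_way_locally_finite :: "nat \<Rightarrow> 'a set \<Rightarrow> ('a \<Rightarrow> 'a \<Rightarrow> bool) \<Rightarrow> bool" where
  "one_way_locally_finite k V E \<longleftrightarrow> 2 \<le> k \<and>
     (\<exists>P :: nat \<Rightarrow> 'a set.
        (\<Union>i\<in>{1..k}. P i) = V \<and>
        (\<forall>i\<in>{1..k}. \<forall>j\<in>{1..k}. i \<noteq> j \<longrightarrow> P i \<inter> P j = {}) \<and>
        (\<forall>i\<in>{1..k}. \<forall>u\<in>P i. \<forall>v\<in>P i. \<not> E u v) \<and>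
        (\<forall>i\<in>{1..k}. \<forall>j\<in>{1..k}. i < j \<longrightarrow> (\<exists>g. inj_on g (P j) \<and> g ` P j \<subseteq> P i)) \<and>
        (\<forall>i\<in>{1..k}. \<forall>j\<in>{1..k}. i < j \<longrightarrow> (\<forall>v\<in>P j. finite {u \<in> P i. E u v})))"

end

theory Submission
  imports Defs "HOL-Analysis.Extended_Real_Limits"
begin

definition ultra :: "nat set set \<Rightarrow> bool" where
  "ultra U \<longleftrightarrow> (\<forall>A\<in>U. \<forall>B. A \<subseteq> B \<longrightarrow> B \<in> U) \<and> (\<forall>A\<in>U. \<forall>B\<in>U. A \<inter> B \<in> U)
     \<and> (\<forall>A. A \<in> U \<or> - A \<in> U) \<and> (\<forall>A\<in>U. infinite A)"

lemma max_filter_exists: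
  fixes F :: "'a filter"
  assumes F: "F \<noteq> bot"
  shows "\<exists>U. U \<noteq> bot \<and> U \<le> F \<and> (\<forall>G. G \<noteq> bot \<longrightarrow> G \<le> U \<longrightarrow> G = U)"
proof -
  let ?R = "{(b, a). a \<noteq> bot \<and> a \<le> b \<and> b \<le> F}"
  have fld: "Field ?R = {G. G \<noteq> bot \<and> G \<le> F}"
    by (auto simp: Field_def bot_unique)
  have "\<exists>m\<in>Field ?R. \<forall>a\<in>Field ?R. (m, a) \<in> ?R \<longrightarrow> a = m"
  proof (rule Zorns_po_lemma)
    show "Partial_order ?R"
      by (auto simp: partial_order_on_def preorder_on_def
          antisym_def refl_on_def trans_def Field_def bot_unique)
    show "\<exists>u\<in>Field ?R. \<forall>a\<in>C. (a, u) \<in> ?R" if C: "C \<in> Chains ?R" for C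
    proof (cases "C = {}")
      case True
      then show ?thesis using F by (auto simp: fld)
    next
      case False
      have nb: "bot \<notin> C" using C by (auto simp: Chains_def)
      have "Inf C = bot \<longleftrightarrow> (\<exists>x\<in>C. x = bot)"
        unfolding trivial_limit_def using C False
        by (intro eventually_Inf_base) (auto simp: Chains_def)
      with nb have i1: "Inf C \<noteq> bot" by auto
      from False obtain x where "x \<in> C" by auto
      with C have i2: "Inf C \<le> F"
        by (auto intro!: Inf_lower2[of x] simp: Chains_def)
      show ?thesis
        apply (rule bexI[of _ "Inf C"])
        using C i1 i2 by (auto intro: Inf_lower simp: Chains_def fld)
    qed
  qed
  then obtain U where U: "U \<noteq> bot" "U \<le> F" and m: "\<And>a. a \<noteq> bot \<Longrightarrow> a \<le> F \<Longrightarrow> a \<le> U \<Longrightarrow> a = U"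
    unfolding fld by blast
  show ?thesis using U m order_trans by blast
qed

lemma ultra_exists:
  assumes "infinite (Z :: nat set)"
  shows "\<exists>U. ultra U \<and> Z \<in> U"
proof -
  let ?F = "inf cofinite (principal Z)"
  have Fnb: "?F \<noteq> bot"
    unfolding trivial_limit_def eventually_inf_principal eventually_cofinite using assms by simp
  obtain U' where U': "U' \<noteq> bot" "U' \<le> ?F" and mx: "\<And>G. G \<noteq> bot \<Longrightarrow> G \<le> U' \<Longrightarrow> G = U'"
    using max_filter_exists[OF Fnb] by blast
  have cof: "U' \<le> cofinite" using U'(2) by (meson inf.boundedE)
  have pz: "U' \<le> principal Z" using U'(2) by (meson inf.boundedE)
  define U where "U = {A. eventually (\<lambda>x. x \<in> A) U'}"
  have dich: "eventually (\<lambda>x. x \<in> A) U' \<or> eventually (\<lambda>x. x \<notin> A) U'" for A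
  proof (rule disjCI)
    assume "\<not> eventually (\<lambda>x. x \<notin> A) U'"
    then have "inf U' (principal A) \<noteq> bot"
      unfolding trivial_limit_def eventually_inf_principal by simp
    then have "inf U' (principal A) = U'" by (rule mx) simp
    moreover have "eventually (\<lambda>x. x \<in> A) (inf U' (principal A))"
      by (simp add: eventually_inf_principal)
    ultimately show "eventually (\<lambda>x. x \<in> A) U'" by simp
  qed
  have "ultra U"
    unfolding ultra_def U_def
  proof (intro conjI ballI allI impI)
    fix A B assume "A \<in> {A. eventually (\<lambda>x. x \<in> A) U'}" "A \<subseteq> B"
    then show "B \<in> {A. eventually (\<lambda>x. x \<in> A) U'}" by (auto elim: eventually_mono)
  next
    fix A B assume "A \<in> {A. eventually (\<lambda>x. x \<in> A) U'}" "B \<in> {A. eventually (\<lambda>x. x \<in> A) U'}"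
    then show "A \<inter> B \<in> {A. eventually (\<lambda>x. x \<in> A) U'}" by (auto intro: eventually_conj)
  next
    fix A show "A \<in> {A. eventually (\<lambda>x. x \<in> A) U'} \<or> - A \<in> {A. eventually (\<lambda>x. x \<in> A) U'}"
      using dich[of A] by auto
  next
    fix A assume "A \<in> {A. eventually (\<lambda>x. x \<in> A) U'}"
    then have ev: "eventually (\<lambda>x. x \<in> A) U'" by simp
    show "infinite A"
    proof
      assume "finite A"
      then have "eventually (\<lambda>x. x \<notin> A) cofinite" by (simp add: eventually_cofinite)
      then have "eventually (\<lambda>x. x \<notin> A) U'" by (rule filter_leD[OF cof])
      with ev have "eventually (\<lambda>x. False) U'" by (auto elim: eventually_rev_mp)
      with U'(1) show False by (simp add: trivial_limit_def)
    qed
  qed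
  moreover have "Z \<in> U"
    unfolding U_def using pz by (simp add: filter_leD eventually_principal)
  ultimately show ?thesis by blast
qed

lemma ultra_inter:
  assumes "ultra U" "finite I" "\<forall>i\<in>I. A i \<in> U" "B \<in> U"
  shows "B \<inter> (\<Inter>i\<in>I. A i) \<in> U"
  using assms(2,3)
proof (induction I rule: finite_induct)
  case empty then show ?case using assms(4) by simp
next
  case (insert x F)
  then have "A x \<inter> (B \<inter> (\<Inter>i\<in>F. A i)) \<in> U" using assms(1) unfolding ultra_def by auto
  then show ?case by (simp add: Int_ac)
qed

lemma ultra_prime:
  assumes "ultra U" "finite C" "(\<Union>c\<in>C. A c) \<in> U"
  shows "\<exists>c\<in>C. A c \<in> U"
  using assms(2,3)
proof (induction C rule: finite_induct)
  case empty then show ?case using assms(1) unfolding ultra_def by auto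
next
  case (insert x F)
  show ?case
  proof (rule ccontr)
    assume "\<not> ?thesis"
    then have n1: "A x \<notin> U" and n2: "(\<Union>c\<in>F. A c) \<notin> U" using insert by auto
    then have "- A x \<in> U" "- (\<Union>c\<in>F. A c) \<in> U" using assms(1) unfolding ultra_def by auto
    then have "- A x \<inter> (- (\<Union>c\<in>F. A c)) \<in> U"
      using assms(1) unfolding ultra_def by blast
    then have "- A x \<inter> (- (\<Union>c\<in>F. A c)) \<inter> (\<Union>c\<in>insert x F. A c) \<in> U"
      using insert.prems assms(1) unfolding ultra_def by (meson IntI)
    moreover have "- A x \<inter> (- (\<Union>c\<in>F. A c)) \<inter> (\<Union>c\<in>insert x F. A c) = {}" by auto
    ultimately show False using assms(1) unfolding ultra_def by auto
  qed
qed

lemma ultra_up: "ultra U \<Longrightarrow> A \<in> U \<Longrightarrow> A \<subseteq> B \<Longrightarrow> B \<in> U"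
  unfolding ultra_def by blast

lemma ultra_cofinite:
  assumes "ultra U" "finite (- A)" shows "A \<in> U"
  using assms unfolding ultra_def by auto

lemma ud_mono: "A \<subseteq> B \<Longrightarrow> upper_density A \<le> upper_density B"
  unfolding upper_density_def
  by (intro Limsup_mono always_eventually allI) (auto intro!: divide_right_mono card_mono)

lemma ud_union: "upper_density (A \<union> B) \<le> upper_density A + upper_density B"
proof -
  let ?f = "\<lambda>S t. ereal (real (card (S \<inter> {1..t})) / real t)"
  have "limsup (?f (A \<union> B)) \<le> limsup (\<lambda>t. ?f A t + ?f B t)"
  proof (intro Limsup_mono always_eventually allI)
    fix t :: nat
    have "card ((A \<union> B) \<inter> {1..t}) \<le> card (A \<inter> {1..t}) + card (B \<inter> {1..t})"
      by (metis Int_Un_distrib2 card_Un_le)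
    then have "real (card ((A \<union> B) \<inter> {1..t})) / real t \<le> real (card (A \<inter> {1..t})) / real t + real (card (B \<inter> {1..t})) / real t"
      by (simp add: add_divide_distrib[symmetric] divide_right_mono)
    then show "?f (A \<union> B) t \<le> ?f A t + ?f B t" by simp
  qed
  also have "\<dots> \<le> limsup (?f A) + limsup (?f B)" by (rule ereal_limsup_add_mono)
  finally show ?thesis unfolding upper_density_def .
qed

lemma ud_finite: "finite A \<Longrightarrow> upper_density A \<le> 0"
proof -
  assume fa: "finite A"
  have "upper_density A \<le> limsup (\<lambda>t. ereal (real (card A) / real t))"
    unfolding upper_density_def
  proof (intro Limsup_mono always_eventually allI)
    fix t :: nat
    have "card (A \<inter> {1..t}) \<le> card A" using fa by (simp add: card_mono)
    then show "ereal (real (card (A \<inter> {1..t})) / real t) \<le> ereal (real (card A) / real t)"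
      by (simp add: divide_right_mono)
  qed
  also have "\<dots> = 0"
  proof -
    have "(\<lambda>t. real (card A) / real t) \<longlonglongrightarrow> 0"
      by (rule lim_const_over_n)
    then have "(\<lambda>t. ereal (real (card A) / real t)) \<longlonglongrightarrow> ereal 0"
      by (rule tendsto_ereal)
    then show ?thesis using lim_imp_Limsup by (metis sequentially_bot zero_ereal_def)
  qed
  finally show ?thesis .
qed

lemma ud_le1: "upper_density A \<le> 1"
  unfolding upper_density_def
proof (intro Limsup_bounded always_eventually allI)
  fix t :: nat
  have "card (A \<inter> {1..t}) \<le> card {1..t}" by (intro card_mono) auto
  then have "real (card (A \<inter> {1..t})) \<le> real t" by simp
  then have "real (card (A \<inter> {1..t})) / real t \<le> 1"
    by (cases "t = 0") (auto simp: divide_le_eq_1)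
  then show "ereal (real (card (A \<inter> {1..t})) / real t) \<le> 1" by simp
qed

lemma ud_pos: "1 \<le> upper_density {1::nat..}"
proof -
  have "limsup (\<lambda>t::nat. (1::ereal)) \<le> upper_density {1..}"
    unfolding upper_density_def
  proof (intro Limsup_mono)
    show "eventually (\<lambda>t. (1::ereal) \<le> ereal (real (card ({1..} \<inter> {1..t})) / real t)) sequentially"
      using eventually_ge_at_top[of "1::nat"] by eventually_elim auto
  qed
  then show ?thesis by (simp add: Limsup_const)
qed

lemma ud_Union:
  assumes "finite C"
  shows "upper_density (\<Union>c\<in>C. A c) \<le> (\<Sum>c\<in>C. upper_density (A c))"
  using assms
proof (induction C rule: finite_induct)
  case empty then show ?case using ud_finite[of "{}"] by simp
next
  case (insert x F)
  have "upper_density (\<Union>c\<in>insert x F. A c) \<le> upper_density (A x) + upper_density (\<Union>c\<in>F. A c)"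
    using ud_union by simp
  also have "\<dots> \<le> upper_density (A x) + (\<Sum>c\<in>F. upper_density (A c))"
    using insert.IH by (simp add: add_left_mono)
  finally show ?case using insert by simp
qed



definition Nb :: "(nat set \<Rightarrow> nat) \<Rightarrow> nat \<Rightarrow> nat \<Rightarrow> nat set" where
  "Nb col c x = {y. 1 \<le> y \<and> y \<noteq> x \<and> col {x, y} = c}"

definition Cl :: "(nat set \<Rightarrow> nat) \<Rightarrow> nat set set \<Rightarrow> nat \<Rightarrow> nat set" where
  "Cl col U c = {x. 1 \<le> x \<and> Nb col c x \<in> U}"

definition tower :: "(nat set \<Rightarrow> nat) \<Rightarrow> nat \<Rightarrow> (nat set set \<times> nat set) list \<Rightarrow> nat set \<Rightarrow> bool" where
  "tower col c T Z \<longleftrightarrow> (\<forall>i<length T. ultra (fst (T!i)) \<and> snd (T!i) \<in> fst (T!i) \<and> snd (T!i) \<subseteq> {1..}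
        \<and> (\<forall>l<i. snd (T!i) \<subseteq> Cl col (fst (T!l)) c)) \<and> (\<forall>l<length T. Z \<subseteq> Cl col (fst (T!l)) c)"

locale emb =
  fixes V :: "'a set" and E :: "'a \<Rightarrow> 'a \<Rightarrow> bool" and k :: nat and P :: "nat \<Rightarrow> 'a set"
    and col :: "nat set \<Rightarrow> nat" and c :: nat and T :: "(nat set set \<times> nat set) list" and X :: "nat set"
  assumes sg: "simple_graph V E" and cV: "countable V" and iV: "infinite V" and k2: "2 \<le> k"
    and cover: "(\<Union>i\<in>{1..k}. P i) = V"
    and disj: "\<forall>i\<in>{1..k}. \<forall>j\<in>{1..k}. i \<noteq> j \<longrightarrow> P i \<inter> P j = {}"
    and indep: "\<forall>i\<in>{1..k}. \<forall>u\<in>P i. \<forall>v\<in>P i. \<not> E u v"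
    and injP: "\<forall>i\<in>{1..k}. \<forall>j\<in>{1..k}. i < j \<longrightarrow> (\<exists>g. inj_on g (P j) \<and> g ` P j \<subseteq> P i)"
    and finP: "\<forall>i\<in>{1..k}. \<forall>j\<in>{1..k}. i < j \<longrightarrow> (\<forall>v\<in>P j. finite {u \<in> P i. E u v})"
    and tw: "tower col c T X" and len: "k - 1 \<le> length T" and X1: "X \<subseteq> {1..}" and iX: "infinite X"
begin

definition lev :: "'a \<Rightarrow> nat" where "lev v = (THE i. i \<in> {1..k} \<and> v \<in> P i)"

lemma lev_eq: assumes "i \<in> {1..k}" "v \<in> P i" shows "lev v = i"
  unfolding lev_def
proof (rule the_equality)
  show "i \<in> {1..k} \<and> v \<in> P i" using assms by simp
  fix j assume "j \<in> {1..k} \<and> v \<in> P j"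
  then show "j = i" using disj assms by blast
qed

lemma lev: assumes "v \<in> V" shows "lev v \<in> {1..k}" "v \<in> P (lev v)"
proof -
  obtain i where "i \<in> {1..k}" "v \<in> P i" using assms cover by blast
  then show "lev v \<in> {1..k}" "v \<in> P (lev v)" using lev_eq by auto
qed

lemma edge: assumes "E u v" shows "u \<in> V" "v \<in> V" "u \<noteq> v" "E v u" "lev u \<noteq> lev v"
proof -
  show "u \<in> V" "v \<in> V" "u \<noteq> v" "E v u" using sg assms unfolding simple_graph_def by auto
  then show "lev u \<noteq> lev v" using indep lev assms by metis
qed

definition L :: "'a \<Rightarrow> 'a set" where "L v = {u \<in> V. E u v \<and> lev u < lev v}"

lemma L_fin: assumes "v \<in> V" shows "finite (L v)"
proof -
  have "L v \<subseteq> (\<Union>i\<in>{1..<lev v}. {u \<in> P i. E u v})"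
  proof
    fix u assume "u \<in> L v"
    then have "u \<in> V" "E u v" "lev u < lev v" by (auto simp: L_def)
    then show "u \<in> (\<Union>i\<in>{1..<lev v}. {u \<in> P i. E u v})" using lev[of u] by auto
  qed
  moreover have "finite (\<Union>i\<in>{1..<lev v}. {u \<in> P i. E u v})"
  proof (intro finite_UN_I)
    fix i assume "i \<in> {1..<lev v}"
    then have i: "i \<in> {1..k}" "i < lev v" using lev(1)[OF assms] by auto
    show "finite {u \<in> P i. E u v}" using finP i lev[OF assms] by blast
  qed simp
  ultimately show ?thesis by (rule finite_subset)
qed

definition idx :: "'a \<Rightarrow> nat" where "idx = to_nat_on V"

lemma idx_inj: "inj_on idx V" unfolding idx_def using cV by (rule inj_on_to_nat_on)

primrec rk :: "nat \<Rightarrow> 'a \<Rightarrow> nat" where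
  "rk 0 v = idx v"
| "rk (Suc n) v = idx v + (\<Sum>u\<in>L v. Suc (rk n u))"

lemma rk_mono1: "rk n u \<le> rk (Suc n) u"
proof (induction n arbitrary: u)
  case 0 then show ?case by simp
next
  case (Suc n)
  have "(\<Sum>w\<in>L u. Suc (rk n w)) \<le> (\<Sum>w\<in>L u. Suc (rk (Suc n) w))"
    by (intro sum_mono) (metis Suc.IH Suc_le_mono)
  then show ?case by simp
qed

lemma rk_mono: "n \<le> m \<Longrightarrow> rk n u \<le> rk m u"
  using lift_Suc_mono_le[of "\<lambda>n. rk n u"] rk_mono1 by blast

definition rank :: "'a \<Rightarrow> nat" where "rank v = rk (lev v) v"

lemma idx_le: "idx v \<le> rank v"
  unfolding rank_def by (cases "lev v") auto

lemma rank_lt: assumes "v \<in> V" "u \<in> L v" shows "rank u < rank v"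
proof -
  have lu: "lev u < lev v" "u \<in> V" using assms(2) by (auto simp: L_def)
  obtain m where m: "lev v = Suc m" using lu by (cases "lev v") auto
  have "rank u = rk (lev u) u" by (simp add: rank_def)
  also have "\<dots> \<le> rk m u" using lu m by (intro rk_mono) simp
  also have "\<dots> < Suc (rk m u)" by simp
  also have "\<dots> \<le> (\<Sum>w\<in>L v. Suc (rk m w))"
    using member_le_sum[of u "L v" "\<lambda>w. Suc (rk m w)"] L_fin[OF assms(1)] assms(2) by simp
  also have "\<dots> \<le> rank v" using m by (simp add: rank_def)
  finally show ?thesis .
qed

definition key :: "'a \<Rightarrow> nat" where "key v = rank v * rank v + rank v + idx v"

lemma key_lt: assumes "rank u < rank v" shows "key u < key v"
proof -
  have "key u \<le> rank u * rank u + rank u + rank u" using idx_le[of u] by (simp add: key_def)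
  also have "\<dots> < Suc (rank u) * Suc (rank u) + Suc (rank u)" by simp
  also have "\<dots> \<le> rank v * rank v + rank v"
    using assms by (intro add_mono mult_le_mono) auto
  also have "\<dots> \<le> key v" by (simp add: key_def)
  finally show ?thesis .
qed

lemma key_inj: "inj_on key V"
proof (rule inj_onI)
  fix u v assume uv: "u \<in> V" "v \<in> V" "key u = key v"
  have "rank u = rank v"
  proof (rule ccontr)
    assume "rank u \<noteq> rank v"
    then have "rank u < rank v \<or> rank v < rank u" by arith
    then show False using key_lt uv(3) by force
  qed
  then have "idx u = idx v" using uv(3) by (simp add: key_def)
  then show "u = v" using idx_inj uv by (auto dest: inj_onD)
qed

lemma key_edge: assumes "v \<in> V" "u \<in> L v" shows "key u < key v"
  using rank_lt[OF assms] by (rule key_lt)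

end



context emb
begin

definition Y :: "nat \<Rightarrow> nat set" where "Y j = snd (T ! (k - j))"
definition UU :: "nat \<Rightarrow> nat set set" where "UU j = fst (T ! (k - j))"
definition vx :: "nat \<Rightarrow> 'a" where "vx n = (THE v. v \<in> V \<and> key v = n)"

lemma vx: assumes "v \<in> V" shows "vx (key v) = v"
  unfolding vx_def using key_inj assms by (auto dest: inj_onD)

definition pick :: "nat \<Rightarrow> nat list \<Rightarrow> nat" where
  "pick n Ls = (if \<exists>v\<in>V. key v = n then
      (if lev (vx n) = 1 then (LEAST x. x \<in> X \<and> x \<notin> set Ls)
       else (LEAST x. x \<in> Y (lev (vx n)) \<and> x \<notin> set Ls \<and>
               (\<forall>u\<in>V. key u < n \<longrightarrow> E u (vx n) \<longrightarrow> col {Ls ! key u, x} = c)))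
    else 0)"

primrec gl :: "nat \<Rightarrow> nat list" where
  "gl 0 = []"
| "gl (Suc n) = gl n @ [pick n (gl n)]"

definition g :: "nat \<Rightarrow> nat" where "g n = pick n (gl n)"

lemma gl_eq: "gl n = map g [0..<n]"
  by (induction n) (simp_all add: g_def)

lemma g_eq: "g n = pick n (map g [0..<n])"
  using gl_eq g_def by simp

lemma tw_facts:
  assumes "i < length T"
  shows "ultra (fst (T!i))" "snd (T!i) \<in> fst (T!i)" "snd (T!i) \<subseteq> {1..}"
    "\<And>l. l < i \<Longrightarrow> snd (T!i) \<subseteq> Cl col (fst (T!l)) c" "X \<subseteq> Cl col (fst (T!i)) c"
  using tw assms unfolding tower_def by auto

lemma lev_ge: "v \<in> V \<Longrightarrow> lev v \<noteq> 1 \<Longrightarrow> 2 \<le> lev v \<and> lev v \<le> k"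
  using lev(1)[of v] by auto

lemma main_inv:
  shows "\<And>v. v \<in> V \<Longrightarrow> key v = n \<Longrightarrow> g n \<notin> g ` {..<n} \<and> (lev v = 1 \<longrightarrow> g n \<in> X)
     \<and> (lev v \<noteq> 1 \<longrightarrow> g n \<in> Y (lev v) \<and> (\<forall>u\<in>V. key u < n \<longrightarrow> E u v \<longrightarrow> col {g (key u), g n} = c))"
proof (induction n rule: less_induct)
  case (less n v)
  have vxn: "vx n = v" using vx less.prems by blast
  have setm: "set (map g [0..<n]) = g ` {..<n}" by auto
  have fin: "finite (g ` {..<n})" by simp
  show ?case
  proof (cases "lev v = 1")
    case True
    have ex: "\<exists>w\<in>V. key w = n" using less.prems by blast
    have "g n = (LEAST x. x \<in> X \<and> x \<notin> set (map g [0..<n]))"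
      unfolding g_eq[of n] pick_def if_P[OF ex] vxn if_P[OF True] ..
    then have gn: "g n = (LEAST x. x \<in> X \<and> x \<notin> g ` {..<n})" unfolding setm .
    have "\<exists>x. x \<in> X \<and> x \<notin> g ` {..<n}"
    proof -
      have "infinite (X - g ` {..<n})" using Diff_infinite_finite[OF fin iX] .
      then obtain x where "x \<in> X - g ` {..<n}" by (metis finite.emptyI ex_in_conv)
      then show ?thesis by blast
    qed
    then have "g n \<in> X \<and> g n \<notin> g ` {..<n}" unfolding gn by (rule LeastI_ex)
    then show ?thesis using True by simp
  next
    case False
    define j where "j = lev v"
    have j: "2 \<le> j" "j \<le> k" using lev_ge less.prems False j_def by auto
    have jT: "k - j < length T" using j len k2 by linarith
    define I where "I = {u \<in> V. key u < n \<and> E u v}"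
    have finI: "finite I"
    proof -
      have "key ` I \<subseteq> {..<n}" by (auto simp: I_def)
      then have "finite (key ` I)" by (rule finite_subset) simp
      moreover have "inj_on key I" using key_inj by (rule inj_on_subset) (auto simp: I_def)
      ultimately show ?thesis using finite_imageD by blast
    qed
    have Iprop: "Nb col c (g (key u)) \<in> UU j" if u: "u \<in> I" for u
    proof -
      have uV: "u \<in> V" "key u < n" "E u v" using u by (auto simp: I_def)
      have "lev u \<noteq> lev v" using edge(5)[OF uV(3)] .
      have "lev u < lev v"
      proof (rule ccontr)
        assume "\<not> lev u < lev v"
        then have "lev v < lev u" using \<open>lev u \<noteq> lev v\<close> by arith
        then have "v \<in> L u" using edge[OF uV(3)] less.prems by (auto simp: L_def)
        then have "key v < key u" using key_edge uV(1) by blast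
        then show False using uV(2) less.prems by simp
      qed
      have IH: "(lev u = 1 \<longrightarrow> g (key u) \<in> X) \<and> (lev u \<noteq> 1 \<longrightarrow> g (key u) \<in> Y (lev u))"
      proof -
        have "key u < n" using uV(2) .
        from less.IH[OF this uV(1) refl] show ?thesis by simp
      qed
      have "g (key u) \<in> Cl col (UU j) c"
      proof (cases "lev u = 1")
        case True
        then show ?thesis using IH tw_facts(5)[OF jT] by (auto simp: UU_def)
      next
        case False
        have lu: "2 \<le> lev u" "lev u < j" using lev_ge[OF uV(1) False] \<open>lev u < lev v\<close> j_def by auto
        have "k - lev u < length T" using lu j len by linarith
        moreover have "k - j < k - lev u" using lu j by linarith
        ultimately have "Y (lev u) \<subseteq> Cl col (UU j) c" using tw_facts(4) by (simp add: Y_def UU_def)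
        then show ?thesis using IH False by blast
      qed
      then show ?thesis by (simp add: Cl_def)
    qed
    have uj: "ultra (UU j)" "Y j \<in> UU j" using tw_facts[OF jT] by (simp_all add: UU_def Y_def)
    define S where "S = Y j \<inter> (\<Inter>u\<in>I. Nb col c (g (key u)))"
    have "\<forall>u\<in>I. Nb col c (g (key u)) \<in> UU j" using Iprop by blast
    then have "S \<in> UU j" unfolding S_def by (rule ultra_inter[OF uj(1) finI _ uj(2)])
    then have "infinite S" using uj(1) unfolding ultra_def by simp
    then have "infinite (S - g ` {..<n})" by (rule Diff_infinite_finite[OF fin])
    then have "S - g ` {..<n} \<noteq> {}" by (metis finite.emptyI)
    then obtain x where x: "x \<in> S" "x \<notin> g ` {..<n}" by blast
    have ex: "\<exists>w\<in>V. key w = n" using less.prems by blast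
    have "g n = (LEAST x. x \<in> Y j \<and> x \<notin> set (map g [0..<n]) \<and>
               (\<forall>u\<in>V. key u < n \<longrightarrow> E u v \<longrightarrow> col {map g [0..<n] ! key u, x} = c))"
      unfolding g_eq[of n] pick_def if_P[OF ex] vxn if_not_P[OF False] j_def ..
    also have "\<dots> = (LEAST x. x \<in> Y j \<and> x \<notin> g ` {..<n} \<and>
               (\<forall>u\<in>V. key u < n \<longrightarrow> E u v \<longrightarrow> col {g (key u), x} = c))"
    proof (intro arg_cong[where f=Least] ext)
      fix x
      have "(\<forall>u\<in>V. key u < n \<longrightarrow> E u v \<longrightarrow> col {map g [0..<n] ! key u, x} = c) =
            (\<forall>u\<in>V. key u < n \<longrightarrow> E u v \<longrightarrow> col {g (key u), x} = c)"
        by (metis nth_map_upt diff_zero add_0)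
      then show "(x \<in> Y j \<and> x \<notin> set (map g [0..<n]) \<and>
               (\<forall>u\<in>V. key u < n \<longrightarrow> E u v \<longrightarrow> col {map g [0..<n] ! key u, x} = c)) =
            (x \<in> Y j \<and> x \<notin> g ` {..<n} \<and>
               (\<forall>u\<in>V. key u < n \<longrightarrow> E u v \<longrightarrow> col {g (key u), x} = c))"
        unfolding setm by simp
    qed
    finally have gn: "g n = (LEAST x. x \<in> Y j \<and> x \<notin> g ` {..<n} \<and>
               (\<forall>u\<in>V. key u < n \<longrightarrow> E u v \<longrightarrow> col {g (key u), x} = c))" .
    have "x \<in> Y j \<and> x \<notin> g ` {..<n} \<and> (\<forall>u\<in>V. key u < n \<longrightarrow> E u v \<longrightarrow> col {g (key u), x} = c)"
      using x by (auto simp: S_def I_def Nb_def)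
    then have "g n \<in> Y j \<and> g n \<notin> g ` {..<n} \<and>
               (\<forall>u\<in>V. key u < n \<longrightarrow> E u v \<longrightarrow> col {g (key u), g n} = c)"
      unfolding gn by (rule LeastI)
    then show ?thesis using False j_def by simp
  qed
qed

end



context emb
begin

lemma P1_inf: "infinite (P 1)"
proof
  assume f1: "finite (P 1)"
  have "finite (P j)" if j: "j \<in> {1..k}" for j
  proof (cases "j = 1")
    case True then show ?thesis using f1 by simp
  next
    case False
    then have "1 < j" using j by auto
    then obtain h where h: "inj_on h (P j)" "h ` P j \<subseteq> P 1" using injP j k2 by force
    then have "finite (h ` P j)" using f1 finite_subset by blast
    then show ?thesis using h(1) finite_imageD by blast
  qed
  then have "finite V" using cover by (metis finite_UN_I finite_atLeastAtMost)
  then show False using iV by simp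
qed

lemma g_nonkey: "\<not> (\<exists>v\<in>V. key v = n) \<Longrightarrow> g n = 0"
  using g_eq[of n] by (simp add: pick_def)

lemma embed_result:
  "inj_on (g \<circ> key) V \<and> (g \<circ> key) ` V \<subseteq> {1..} \<and> (\<forall>u v. E u v \<longrightarrow> col {(g \<circ> key) u, (g \<circ> key) v} = c)
    \<and> X \<subseteq> (g \<circ> key) ` V"
proof (intro conjI)
  note MI = main_inv[OF _ refl]
  show "inj_on (g \<circ> key) V"
  proof (rule inj_onI)
    fix u v assume uv: "u \<in> V" "v \<in> V" "(g \<circ> key) u = (g \<circ> key) v"
    show "u = v"
    proof (rule ccontr)
      assume "u \<noteq> v"
      then have "key u \<noteq> key v" using key_inj uv by (auto dest: inj_onD)
      then have "key u < key v \<or> key v < key u" by arith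
      then show False
      proof
        assume "key u < key v"
        then have "g (key u) \<in> g ` {..<key v}" by simp
        then show False using MI[OF uv(2)] uv(3) by simp
      next
        assume "key v < key u"
        then have "g (key v) \<in> g ` {..<key u}" by simp
        then show False using MI[OF uv(1)] uv(3) by simp
      qed
    qed
  qed
  show "(g \<circ> key) ` V \<subseteq> {1..}"
  proof
    fix y assume "y \<in> (g \<circ> key) ` V"
    then obtain v where v: "v \<in> V" "y = g (key v)" by auto
    show "y \<in> {1..}"
    proof (cases "lev v = 1")
      case True then show ?thesis using MI[OF v(1)] v X1 by auto
    next
      case False
      then have "k - lev v < length T" using lev_ge[OF v(1) False] len by linarith
      then have "Y (lev v) \<subseteq> {1..}" using tw_facts(3) by (simp add: Y_def)
      then show ?thesis using MI[OF v(1)] v False by auto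
    qed
  qed
  show "\<forall>u v. E u v \<longrightarrow> col {(g \<circ> key) u, (g \<circ> key) v} = c"
  proof (intro allI impI)
    fix u v assume e: "E u v"
    have gen: "col {g (key a), g (key b)} = c" if ab: "E a b" "lev a < lev b" for a b
    proof -
      have "a \<in> L b" using edge[OF ab(1)] ab by (auto simp: L_def)
      then have "key a < key b" using key_edge edge(2)[OF ab(1)] by blast
      moreover have "lev b \<noteq> 1" using ab(2) lev(1)[OF edge(1)[OF ab(1)]] by auto
      ultimately show ?thesis using MI[OF edge(2)[OF ab(1)]] edge(1)[OF ab(1)] ab(1) by blast
    qed
    have "lev u < lev v \<or> lev v < lev u" using edge(5)[OF e] by arith
    then show "col {(g \<circ> key) u, (g \<circ> key) v} = c"
    proof
      assume "lev u < lev v" then show ?thesis using gen e by simp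
    next
      assume "lev v < lev u" then show ?thesis using gen[OF edge(4)[OF e]] by (simp add: insert_commute)
    qed
  qed
  show "X \<subseteq> (g \<circ> key) ` V"
  proof
    fix x assume xX: "x \<in> X"
    show "x \<in> (g \<circ> key) ` V"
    proof (rule ccontr)
      assume nx: "x \<notin> (g \<circ> key) ` V"
      have notin: "x \<notin> g ` {..<n}" for n
      proof
        assume "x \<in> g ` {..<n}"
        then obtain m where m: "x = g m" by auto
        show False
        proof (cases "\<exists>v\<in>V. key v = m")
          case True then show False using nx m by force
        next
          case False then show False using g_nonkey m xX X1 by force
        qed
      qed
      have le: "g (key a) \<le> x" if a: "a \<in> P 1" for a
      proof -
        have aV: "a \<in> V" using a cover k2 by force
        have l1: "lev a = 1" using lev_eq[of 1 a] a k2 by simp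
        have ex: "\<exists>w\<in>V. key w = key a" using aV by blast
        have "g (key a) = (LEAST y. y \<in> X \<and> y \<notin> set (map g [0..<key a]))"
          unfolding g_eq[of "key a"] pick_def if_P[OF ex] vx[OF aV] if_P[OF l1] ..
        also have "\<dots> \<le> x" using xX notin[of "key a"] by (intro Least_le) (simp add: atLeast0LessThan)
        finally show ?thesis .
      qed
      have "inj_on (g \<circ> key) (P 1)"
        using \<open>inj_on (g \<circ> key) V\<close> by (rule inj_on_subset) (use cover k2 in force)
      moreover have "(g \<circ> key) ` P 1 \<subseteq> {..x}" using le by auto
      ultimately have "finite (P 1)" using finite_subset finite_imageD by (metis finite_atMost)
      then show False using P1_inf by simp
    qed
  qed
qed

end



lemma Rd_col_nonneg: "0 \<le> Rd_col col V E"
  unfolding Rd_col_def by (rule Sup_upper) simp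

lemma Rd_col_le1: "Rd_col col V E \<le> 1"
  unfolding Rd_col_def by (rule Sup_least) (auto intro: ud_le1)

lemma embed_global:
  assumes sg: "simple_graph V E" and cV: "countable V" and iV: "infinite V"
    and ow: "one_way_locally_finite k V E"
    and tw: "tower col c T X" and len: "k - 1 \<le> length T" and X1: "X \<subseteq> {1..}"
  shows "upper_density X \<le> Rd_col col V E"
proof (cases "finite X")
  case True
  show ?thesis by (rule order_trans[OF ud_finite[OF True] Rd_col_nonneg])
next
  case False
  have k2: "2 \<le> k" using ow unfolding one_way_locally_finite_def by simp
  obtain P where PP: "(\<Union>i\<in>{1..k}. P i) = V \<and>
        (\<forall>i\<in>{1..k}. \<forall>j\<in>{1..k}. i \<noteq> j \<longrightarrow> P i \<inter> P j = {}) \<and>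
        (\<forall>i\<in>{1..k}. \<forall>u\<in>P i. \<forall>v\<in>P i. \<not> E u v) \<and>
        (\<forall>i\<in>{1..k}. \<forall>j\<in>{1..k}. i < j \<longrightarrow> (\<exists>g. inj_on g (P j) \<and> g ` P j \<subseteq> P i)) \<and>
        (\<forall>i\<in>{1..k}. \<forall>j\<in>{1..k}. i < j \<longrightarrow> (\<forall>v\<in>P j. finite {u \<in> P i. E u v}))"
    using ow[unfolded one_way_locally_finite_def, THEN conjunct2] by (rule exE)
  note P = PP[THEN conjunct1] PP[THEN conjunct2, THEN conjunct1]
     PP[THEN conjunct2, THEN conjunct2, THEN conjunct1]
     PP[THEN conjunct2, THEN conjunct2, THEN conjunct2, THEN conjunct1]
     PP[THEN conjunct2, THEN conjunct2, THEN conjunct2, THEN conjunct2]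
  interpret emb V E k P col c T X
    by (rule emb.intro) (fact sg cV iV k2 P tw len X1 False)+
  let ?f = "g \<circ> key"
  have r: "inj_on ?f V" "?f ` V \<subseteq> {1..}" "\<forall>u v. E u v \<longrightarrow> col {?f u, ?f v} = c" "X \<subseteq> ?f ` V"
    using embed_result by auto
  have "?f ` V \<in> mono_copies col V E"
    unfolding mono_copies_def using r(1,2,3) by blast
  then have "upper_density (?f ` V) \<le> Rd_col col V E"
    unfolding Rd_col_def by (intro Sup_upper) blast
  moreover have "upper_density X \<le> upper_density (?f ` V)" using r(4) by (rule ud_mono)
  ultimately show ?thesis by simp
qed

lemma tower_mono: "tower col c T Z \<Longrightarrow> Z' \<subseteq> Z \<Longrightarrow> tower col c T Z'"
  unfolding tower_def by blast

lemma tower_ext: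
  assumes "tower col c T Z" "ultra W" "Z \<in> W" "Z \<subseteq> {1..}"
  shows "tower col c (T @ [(W, Z)]) (Z \<inter> Cl col W c)"
  using assms unfolding tower_def
  by (auto simp: nth_append less_Suc_eq)

lemma tower_rep:
  assumes "ultra W" "Y \<in> W" "Y \<subseteq> {1..}" "Y \<subseteq> Cl col W c"
  shows "tower col c (replicate n (W, Y)) Y"
  using assms unfolding tower_def by auto

definition Dn :: "nat \<Rightarrow> nat \<Rightarrow> real" where "Dn r n = (\<Sum>i=0..n. (real r - 1) ^ i)"

lemma Dn_Suc: "Dn r (Suc n) = 1 + (real r - 1) * Dn r n"
  unfolding Dn_def
  by (subst sum.atLeast0_atMost_Suc_shift) (simp add: sum_distrib_left)

lemma Dn_ge1: "1 \<le> r \<Longrightarrow> 1 \<le> Dn r n"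
proof (induction n)
  case 0 then show ?case by (simp add: Dn_def)
next
  case (Suc n)
  have "0 \<le> (real r - 1) * Dn r n" using Suc by simp
  then show ?case by (simp add: Dn_Suc)
qed



locale treeloc =
  fixes V :: "'a set" and E :: "'a \<Rightarrow> 'a \<Rightarrow> bool" and k r :: nat and col :: "nat set \<Rightarrow> nat"
  assumes sg: "simple_graph V E" and cV: "countable V" and iV: "infinite V"
    and ow: "one_way_locally_finite k V E" and rc: "r_coloring r col" and r1: "1 \<le> r"
begin

definition rho :: real where "rho = real_of_ereal (Rd_col col V E)"

lemma rho: "Rd_col col V E = ereal rho" "0 \<le> rho"
proof -
  have a: "0 \<le> Rd_col col V E" "Rd_col col V E \<le> 1" by (rule Rd_col_nonneg, rule Rd_col_le1)
  then show "Rd_col col V E = ereal rho" unfolding rho_def by (cases "Rd_col col V E") auto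
  then show "0 \<le> rho" using a by simp
qed

definition defic :: "(nat \<Rightarrow> (nat set set \<times> nat set) list) \<Rightarrow> nat" where
  "defic T = (\<Sum>c\<in>{1..r}. (k - 2 - length (T c)))"

lemma cover_colors:
  assumes W: "ultra W" and x: "1 \<le> x"
  shows "\<exists>c\<in>{1..r}. x \<in> Cl col W c"
proof -
  have "{y. 1 \<le> y \<and> y \<noteq> x} = (\<Union>c\<in>{1..r}. Nb col c x)"
  proof
    show "{y. 1 \<le> y \<and> y \<noteq> x} \<subseteq> (\<Union>c\<in>{1..r}. Nb col c x)"
    proof
      fix y assume y: "y \<in> {y. 1 \<le> y \<and> y \<noteq> x}"
      then have "col {x, y} \<in> {1..r}" using rc x unfolding r_coloring_def by simp
      then show "y \<in> (\<Union>c\<in>{1..r}. Nb col c x)" using y unfolding Nb_def by blast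
    qed
    show "(\<Union>c\<in>{1..r}. Nb col c x) \<subseteq> {y. 1 \<le> y \<and> y \<noteq> x}" unfolding Nb_def by blast
  qed
  moreover have "{y. 1 \<le> y \<and> y \<noteq> x} \<in> W"
  proof (rule ultra_cofinite[OF W])
    have "- {y. 1 \<le> y \<and> y \<noteq> x} \<subseteq> {0, x}" by auto
    then show "finite (- {y. 1 \<le> y \<and> y \<noteq> (x::nat)})" by (rule finite_subset) simp
  qed
  ultimately have "(\<Union>c\<in>{1..r}. Nb col c x) \<in> W" by simp
  then obtain c where "c \<in> {1..r}" "Nb col c x \<in> W" using ultra_prime[OF W] by blast
  then show ?thesis using x by (auto simp: Cl_def)
qed

lemma step:
  assumes IH: "\<forall>Z' T'. Z' \<subseteq> {1..} \<longrightarrow> (\<forall>c\<in>{1..r}. tower col c (T' c) Z') \<longrightarrow> defic T' < n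
                  \<longrightarrow> upper_density Z' \<le> ereal (Dn r n * rho)"
    and Z1: "Z \<subseteq> {1..}" and tws: "\<forall>c\<in>{1..r}. tower col c (T c) Z" and df: "defic T \<le> n"
  shows "upper_density Z \<le> ereal (Dn r (Suc n) * rho)"
proof (cases "finite Z")
  case True
  have "0 \<le> Dn r (Suc n) * rho"
    using Dn_ge1[OF r1, of "Suc n"] rho(2) by (intro mult_nonneg_nonneg) simp_all
  then have "(0::ereal) \<le> ereal (Dn r (Suc n) * rho)" by simp
  then show ?thesis by (rule order_trans[OF ud_finite[OF True]])
next
  case False
  obtain W where W: "ultra W" "Z \<in> W" using ultra_exists[OF False] by blast
  define Zc where "Zc c = Z \<inter> Cl col W c" for c
  have cov: "Z \<subseteq> (\<Union>c\<in>{1..r}. Zc c)"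
  proof
    fix x assume "x \<in> Z"
    then show "x \<in> (\<Union>c\<in>{1..r}. Zc c)" using cover_colors[OF W(1)] Z1 by (auto simp: Zc_def)
  qed
  have "(\<Union>c\<in>{1..r}. Zc c) \<in> W" by (rule ultra_up[OF W(1) W(2) cov])
  then obtain e where e: "e \<in> {1..r}" "Zc e \<in> W" using ultra_prime[OF W(1)] by blast
  have Zc1: "Zc c \<subseteq> {1..}" for c using Z1 by (auto simp: Zc_def)
  have be: "upper_density (Zc e) \<le> ereal rho"
  proof -
    have "tower col e (replicate (k - 1) (W, Zc e)) (Zc e)"
      by (rule tower_rep[OF W(1) e(2) Zc1]) (auto simp: Zc_def)
    then have "upper_density (Zc e) \<le> Rd_col col V E"
      by (rule embed_global[OF sg cV iV ow _ _ Zc1]) simp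
    then show ?thesis using rho(1) by simp
  qed
  have bd: "upper_density (Zc d) \<le> ereal (Dn r n * rho)" if d: "d \<in> {1..r}" for d
  proof -
    have td: "tower col d (T d @ [(W, Z)]) (Zc d)"
      unfolding Zc_def by (rule tower_ext[OF _ W Z1]) (use tws d in blast)
    have "1 * rho \<le> Dn r n * rho" using Dn_ge1[OF r1, of n] rho(2) by (rule mult_right_mono)
    then have rD: "ereal rho \<le> ereal (Dn r n * rho)" by simp
    show ?thesis
    proof (cases "k - 2 \<le> length (T d)")
      case True
      have "k - 1 \<le> length (T d @ [(W, Z)])" using True by simp
      then have "upper_density (Zc d) \<le> Rd_col col V E"
        by (rule embed_global[OF sg cV iV ow td _ Zc1])
      then have "upper_density (Zc d) \<le> ereal rho" using rho(1) by simp
      then show ?thesis using rD by (rule order_trans)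
    next
      case False
      define T' where "T' = T(d := T d @ [(W, Z)])"
      have tws': "\<forall>c\<in>{1..r}. tower col c (T' c) (Zc d)"
      proof
        fix c assume c: "c \<in> {1..r}"
        show "tower col c (T' c) (Zc d)"
        proof (cases "c = d")
          case True then show ?thesis using td by (simp add: T'_def)
        next
          case False
          have "tower col c (T c) Z" using tws c by blast
          moreover have "T' c = T c" using False by (simp add: T'_def)
          moreover have "Zc d \<subseteq> Z" by (auto simp: Zc_def)
          ultimately show ?thesis using tower_mono by metis
        qed
      qed
      have "defic T' < defic T"
        unfolding defic_def
      proof (rule sum_strict_mono_ex1)
        show "\<forall>x\<in>{1..r}. k - 2 - length (T' x) \<le> k - 2 - length (T x)"
          by (auto simp: T'_def)
        show "\<exists>a\<in>{1..r}. k - 2 - length (T' a) < k - 2 - length (T a)"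
          using d False by (intro bexI[of _ d]) (auto simp: T'_def)
      qed simp
      then have "defic T' < n" using df by simp
      then show ?thesis using spec[OF spec[OF IH, of "Zc d"], of T'] Zc1[of d] tws' by blast
    qed
  qed
  have "upper_density Z \<le> upper_density (\<Union>c\<in>{1..r}. Zc c)" using cov by (rule ud_mono)
  also have "\<dots> \<le> (\<Sum>c\<in>{1..r}. upper_density (Zc c))" by (rule ud_Union) simp
  also have "\<dots> \<le> (\<Sum>c\<in>{1..r}. ereal (if c = e then rho else Dn r n * rho))"
    using be bd by (intro sum_mono) auto
  also have "\<dots> = ereal (\<Sum>c\<in>{1..r}. (if c = e then rho else Dn r n * rho))" by simp
  also have "(\<Sum>c\<in>{1..r}. (if c = e then rho else Dn r n * rho)) = rho + (\<Sum>c\<in>{1..r} - {e}. Dn r n * rho)"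
  proof -
    have "(\<Sum>c\<in>{1..r}. (if c = e then rho else Dn r n * rho)) =
       (if e = e then rho else Dn r n * rho) + (\<Sum>c\<in>{1..r} - {e}. (if c = e then rho else Dn r n * rho))"
      by (rule sum.remove[OF _ e(1)]) simp
    also have "(\<Sum>c\<in>{1..r} - {e}. (if c = e then rho else Dn r n * rho)) = (\<Sum>c\<in>{1..r} - {e}. Dn r n * rho)"
      by (rule sum.cong) auto
    finally show ?thesis by simp
  qed
  also have "\<dots> = rho + real (r - 1) * (Dn r n * rho)" using e(1) by simp
  also have "\<dots> = Dn r (Suc n) * rho" using r1 by (simp add: Dn_Suc algebra_simps of_nat_diff)
  finally show ?thesis .
qed

lemma tree: "\<forall>Z T. Z \<subseteq> {1..} \<longrightarrow> (\<forall>c\<in>{1..r}. tower col c (T c) Z) \<longrightarrow> defic T \<le> n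
                  \<longrightarrow> upper_density Z \<le> ereal (Dn r (Suc n) * rho)"
proof (induction n)
  case 0
  show ?case
  proof (intro allI impI)
    fix Z T assume a: "Z \<subseteq> {1..}" "\<forall>c\<in>{1..r}. tower col c (T c) Z" "defic T \<le> 0"
    show "upper_density Z \<le> ereal (Dn r (Suc 0) * rho)" by (rule step[OF _ a]) simp
  qed
next
  case (Suc n)
  show ?case
  proof (intro allI impI)
    fix Z T assume a: "Z \<subseteq> {1..}" "\<forall>c\<in>{1..r}. tower col c (T c) Z" "defic T \<le> Suc n"
    have IH': "\<forall>Z' T'. Z' \<subseteq> {1..} \<longrightarrow> (\<forall>c\<in>{1..r}. tower col c (T' c) Z') \<longrightarrow> defic T' < Suc n
                  \<longrightarrow> upper_density Z' \<le> ereal (Dn r (Suc n) * rho)"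
    proof (intro allI impI)
      fix Z' T' assume b: "Z' \<subseteq> {1..}" "\<forall>c\<in>{1..r}. tower col c (T' c) Z'" "defic T' < Suc n"
      then have "defic T' \<le> n" by simp
      then show "upper_density Z' \<le> ereal (Dn r (Suc n) * rho)"
        using spec[OF spec[OF Suc.IH, of Z'], of T'] b(1,2) by blast
    qed
    show "upper_density Z \<le> ereal (Dn r (Suc (Suc n)) * rho)" by (rule step[OF IH' a])
  qed
qed

lemma bound: "ereal (1 / Dn r ((k - 2) * r + 1)) \<le> Rd_col col V E"
proof -
  have "tower col c [] {1..}" for c by (simp add: tower_def)
  moreover have "defic (\<lambda>c. []) \<le> (k - 2) * r" by (simp add: defic_def)
  ultimately have "upper_density {1..} \<le> ereal (Dn r (Suc ((k - 2) * r)) * rho)"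
    using spec[OF spec[OF tree, of "{1..}"], of "\<lambda>c. []"] by simp
  with ud_pos have "(1::ereal) \<le> ereal (Dn r (Suc ((k - 2) * r)) * rho)" by (rule order_trans)
  then have "1 \<le> Dn r ((k - 2) * r + 1) * rho" by simp
  moreover have "0 < Dn r ((k - 2) * r + 1)" using Dn_ge1[OF r1, of "(k - 2) * r + 1"] by simp
  ultimately have "1 / Dn r ((k - 2) * r + 1) \<le> rho" by (simp add: divide_le_eq mult.commute)
  then show ?thesis using rho(1) by simp
qed

end

lemma general_bound:
  assumes "simple_graph V E" "countable V" "infinite V" "one_way_locally_finite k V E" "1 \<le> r"
  shows "ereal (1 / Dn r ((k - 2) * r + 1)) \<le> Rd r V E"
  unfolding Rd_def
proof (rule Inf_greatest)
  fix x assume "x \<in> (\<lambda>col. Rd_col col V E) ` {col. r_coloring r col}"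
  then obtain col where "r_coloring r col" "x = Rd_col col V E" by blast
  then interpret treeloc V E k r col using assms by unfold_locales auto
  show "ereal (1 / Dn r ((k - 2) * r + 1)) \<le> x" using bound \<open>x = _\<close> by simp
qed



lemma Dn_one: "Dn r (Suc 0) = real r"
  by (simp add: Dn_Suc Dn_def)

lemma Dn_two: "Dn 2 n = real n + 1"
  by (induction n) (simp_all add: Dn_Suc Dn_def[of 2 0])

lemma sum_le_pow:
  assumes "2 \<le> r"
  shows "(\<Sum>i=0..m. (real r - 1) ^ i) \<le> real r ^ m"
proof (induction m)
  case 0 then show ?case by simp
next
  case (Suc m)
  have a: "0 \<le> real r - 1" using assms by simp
  have "(real r - 1) ^ m \<le> real r ^ m" using a by (intro power_mono) auto
  then have b: "(real r - 1) ^ Suc m \<le> (real r - 1) * real r ^ m"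
    using a by (simp add: mult_left_mono)
  have "(\<Sum>i=0..Suc m. (real r - 1) ^ i) = (\<Sum>i=0..m. (real r - 1) ^ i) + (real r - 1) ^ Suc m"
    by simp
  also have "\<dots> \<le> real r ^ m + (real r - 1) * real r ^ m" using Suc b by linarith
  also have "\<dots> = real r ^ Suc m" by (simp add: algebra_simps)
  finally show ?case .
qed

theorem mainTheorem1:
  fixes V :: "'a set" and E :: "'a \<Rightarrow> 'a \<Rightarrow> bool" and k r :: nat
  assumes "simple_graph V E" and "countable V" and "infinite V"
    and "one_way_locally_finite k V E"
  shows "(k = 2 \<and> 1 \<le> r \<longrightarrow> ereal (1 / real r) \<le> Rd r V E)
       \<and> (2 \<le> k \<longrightarrow> ereal (1 / (2 * (real k - 1))) \<le> Rd 2 V E)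
       \<and> (3 \<le> r \<and> 3 \<le> k \<longrightarrow>
            ereal (1 / (\<Sum>i=0..(k-2)*r+1. (real r - 1) ^ i)) \<le> Rd r V E
          \<and> 1 / (\<Sum>i=0..(k-2)*r+1. (real r - 1) ^ i) \<ge> 1 / real r ^ ((k-2)*r+1))"
proof (intro conjI impI)
  note GB = general_bound[OF assms]
  have k2: "2 \<le> k" using assms(4) unfolding one_way_locally_finite_def by simp
  show "ereal (1 / real r) \<le> Rd r V E" if "k = 2 \<and> 1 \<le> r"
    using GB[of r] that Dn_one[of r] by simp
  show "ereal (1 / (2 * (real k - 1))) \<le> Rd 2 V E"
  proof -
    have "Dn 2 ((k - 2) * 2 + 1) = 2 * (real k - 1)" using k2 by (simp add: Dn_two of_nat_diff)
    then show ?thesis using GB[of 2] by simp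
  qed
  show "ereal (1 / (\<Sum>i=0..(k-2)*r+1. (real r - 1) ^ i)) \<le> Rd r V E" if "3 \<le> r \<and> 3 \<le> k"
    using GB[of r] that by (simp add: Dn_def)
  show "1 / (\<Sum>i=0..(k-2)*r+1. (real r - 1) ^ i) \<ge> 1 / real r ^ ((k-2)*r+1)" if "3 \<le> r \<and> 3 \<le> k"
  proof -
    have r2: "2 \<le> r" using that by simp
    have pos: "0 < (\<Sum>i=0..(k-2)*r+1. (real r - 1) ^ i)"
      using Dn_ge1[of r "(k-2)*r+1"] r2 unfolding Dn_def by simp
    have le: "(\<Sum>i=0..(k-2)*r+1. (real r - 1) ^ i) \<le> real r ^ ((k-2)*r+1)"
      by (rule sum_le_pow[OF r2])
    have "0 < real r ^ ((k-2)*r+1) * (\<Sum>i=0..(k-2)*r+1. (real r - 1) ^ i)"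
      using pos r2 by (intro mult_pos_pos) simp_all
    then show ?thesis using le by (intro divide_left_mono) simp_all
  qed
qed


end
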